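(* Let $T$ be a tree on $n$ vertices, with vertex set $\{1,\dots,n\}$, and fix vertices $r$ and $a$ of $T$ (not necessarily distinct). Then $$0\le 2\sum_{b=1}^n d_{r,P_{a,b}}\le n(n-1).$$ The upper bound is achieved if and only if $T$ is a path on $n$ vertices and $r$ and $a$ are its two end vertices; the lower bound is achieved if and only if $r=a$.
   Context: $P_{a,b}$ denotes the unique path in $T$ between $a$ and $b$ (when $a=b$ it is the single vertex $a$). $d_{r,P_{a,b}}$ is the distance in $T$ from $r$ to the vertex of $P_{a,b}$ closest to $r$. *)

theory Defs
  imports Main
begin

definition graph_on :: "'a set \<Rightarrow> ('a \<Rightarrow> 'a \<Rightarrow> bool) \<Rightarrow> bool" where
  "graph_on V E \<longleftrightarrow> (\<forall>u v. E u v \<longrightarrow> u \<in> V \<and> v \<in> V) \<and> (\<forall>u v. E u v \<longrightarrow> E v u) \<and> (\<forall>v. \<not> E v v)"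

definition walk :: "'a set \<Rightarrow> ('a \<Rightarrow> 'a \<Rightarrow> bool) \<Rightarrow> 'a list \<Rightarrow> bool" where
  "walk V E xs \<longleftrightarrow> xs \<noteq> [] \<and> set xs \<subseteq> V \<and> (\<forall>i. Suc i < length xs \<longrightarrow> E (xs ! i) (xs ! Suc i))"

definition connected_graph :: "'a set \<Rightarrow> ('a \<Rightarrow> 'a \<Rightarrow> bool) \<Rightarrow> bool" where
  "connected_graph V E \<longleftrightarrow> (\<forall>u\<in>V. \<forall>v\<in>V. \<exists>xs. walk V E xs \<and> hd xs = u \<and> last xs = v)"

definition is_cycle :: "'a set \<Rightarrow> ('a \<Rightarrow> 'a \<Rightarrow> bool) \<Rightarrow> 'a list \<Rightarrow> bool" where
  "is_cycle V E c \<longleftrightarrow> walk V E c \<and> distinct c \<and> length c \<ge> 3 \<and> E (last c) (hd c)"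

definition is_tree :: "'a set \<Rightarrow> ('a \<Rightarrow> 'a \<Rightarrow> bool) \<Rightarrow> bool" where
  "is_tree V E \<longleftrightarrow> graph_on V E \<and> V \<noteq> {} \<and> connected_graph V E \<and> \<not> (\<exists>c. is_cycle V E c)"

definition tree_path :: "'a set \<Rightarrow> ('a \<Rightarrow> 'a \<Rightarrow> bool) \<Rightarrow> 'a \<Rightarrow> 'a \<Rightarrow> 'a list" where
  "tree_path V E a b = (THE p. walk V E p \<and> distinct p \<and> hd p = a \<and> last p = b)"

definition gdist :: "'a set \<Rightarrow> ('a \<Rightarrow> 'a \<Rightarrow> bool) \<Rightarrow> 'a \<Rightarrow> 'a \<Rightarrow> nat" where
  "gdist V E u v = (LEAST k. \<exists>xs. walk V E xs \<and> hd xs = u \<and> last xs = v \<and> length xs = Suc k)"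

definition dist_to_path :: "'a set \<Rightarrow> ('a \<Rightarrow> 'a \<Rightarrow> bool) \<Rightarrow> 'a \<Rightarrow> 'a \<Rightarrow> 'a \<Rightarrow> nat" where
  "dist_to_path V E r a b = Min (gdist V E r ` set (tree_path V E a b))"

definition path_graph_with_ends :: "'a set \<Rightarrow> ('a \<Rightarrow> 'a \<Rightarrow> bool) \<Rightarrow> 'a \<Rightarrow> 'a \<Rightarrow> bool" where
  "path_graph_with_ends V E r a \<longleftrightarrow> (\<exists>p. distinct p \<and> set p = V \<and>
     (\<forall>u v. E u v \<longleftrightarrow> (\<exists>i. Suc i < length p \<and> {u, v} = {p ! i, p ! Suc i})) \<and>
     hd p = r \<and> last p = a)"

end

theory Submission
  imports Defs
begin

lemma walk_alt: "walk V E xs \<longleftrightarrow> xs \<noteq> [] \<and> set xs \<subseteq> V \<and> successively E xs"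
  by (simp add: walk_def successively_conv_nth)

lemma gdist_le:
  assumes "walk V E xs" "hd xs = u" "last xs = v"
  shows "gdist V E u v \<le> length xs - 1"
  unfolding gdist_def
proof (rule Least_le)
  show "\<exists>ys. walk V E ys \<and> hd ys = u \<and> last ys = v \<and> length ys = Suc (length xs - 1)"
    using assms by (intro exI[of _ xs]) (cases xs, auto simp: walk_def)
qed

lemma gdist_ex:
  assumes "connected_graph V E" "u \<in> V" "v \<in> V"
  shows "\<exists>xs. walk V E xs \<and> hd xs = u \<and> last xs = v \<and> length xs = Suc (gdist V E u v)"
proof -
  obtain xs where xs: "walk V E xs" "hd xs = u" "last xs = v"
    using assms unfolding connected_graph_def by blast
  then have "\<exists>k xs. walk V E xs \<and> hd xs = u \<and> last xs = v \<and> length xs = Suc k"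
    by (intro exI[of _ "length xs - 1"] exI[of _ xs]) (cases xs, auto simp: walk_def)
  then show ?thesis unfolding gdist_def by (rule LeastI_ex)
qed

lemma shortest_distinct:
  assumes "walk V E xs" "hd xs = u" "last xs = v" "length xs = Suc (gdist V E u v)"
  shows "distinct xs"
proof (rule ccontr)
  assume "\<not> distinct xs"
  then obtain ys y zs ws where d: "xs = ys @ [y] @ zs @ [y] @ ws"
    using not_distinct_decomp by blast
  let ?xs = "ys @ [y] @ ws"
  have a1: "successively E ((ys @ [y] @ zs) @ (y # ws))" "set xs \<subseteq> V"
    using assms(1) unfolding walk_alt d by auto
  then have a2: "successively E (ys @ [y])" "successively E (y # ws)"
    unfolding successively_append_iff by auto
  have w: "walk V E ?xs" using a1(2) a2 unfolding walk_alt d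
    using successively_append_iff[of E "ys @ [y]" ws]
    by (cases ws) (auto simp: successively_append_iff)
  have h1: "hd ?xs = u" using assms(2) d by (cases ys) auto
  have h2: "last ?xs = v" using assms(3) d by (cases ws) auto
  have "gdist V E u v \<le> length ?xs - 1" using gdist_le[OF w h1 h2] .
  then show False using assms(4) d by simp
qed

lemma path_unique:
  assumes nc: "\<not> (\<exists>c. is_cycle V E c)" and sym: "\<And>u v. E u v \<Longrightarrow> E v u"
  shows "walk V E p \<Longrightarrow> walk V E q \<Longrightarrow> distinct p \<Longrightarrow> distinct q \<Longrightarrow> hd p = hd q \<Longrightarrow> last p = last q \<Longrightarrow> p = q"
proof (induction p arbitrary: q)
  case Nil
  then show ?case by (simp add: walk_def)
next
  case (Cons x p')
  obtain q' where q: "q = x # q'" using Cons.prems by (cases q) (auto simp: walk_def)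
  show ?case
  proof (cases "p' = [] \<or> q' = []")
    case True
    then show ?thesis using Cons.prems q
      by (metis distinct.simps(2) last.simps last_in_set list.sel(1))
  next
    case False
    then have ne: "p' \<noteq> []" "q' \<noteq> []" by auto
    have wp: "walk V E p'" "E x (hd p')" using Cons.prems(1) ne by (auto simp: walk_alt successively_Cons)
    have wq: "walk V E q'" "E x (hd q')" using Cons.prems(2) ne q by (auto simp: walk_alt successively_Cons)
    have dp: "distinct p'" "x \<notin> set p'" using Cons.prems by auto
    have dq: "distinct q'" "x \<notin> set q'" using Cons.prems q by auto
    have lst: "last p' = last q'" using Cons.prems ne q by auto
    show ?thesis
    proof (cases "hd p' = hd q'")
      case True
      then have "p' = q'" using Cons.IH wp wq dp dq lst by blast
      then show ?thesis using q by simp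
    next
      case hne: False
      have "\<exists>z\<in>set p'. z \<in> set q'" using ne lst by (metis last_in_set)
      then obtain p1 c zs where sp: "p' = p1 @ c # zs" "c \<in> set q'" "\<forall>y\<in>set p1. y \<notin> set q'"
        using split_list_first_prop[of p' "\<lambda>z. z \<in> set q'"] by blast
      obtain q1 ws where sq: "q' = q1 @ c # ws" using sp(2) split_list by metis
      have cq1: "c \<notin> set q1" using dq sq by simp
      define C where "C = x # p1 @ c # rev q1"
      have s1: "successively E (p1 @ [c])"
        using wp(1) sp(1) unfolding walk_alt by (auto simp: successively_append_iff)
      have s2: "successively E (q1 @ [c])"
        using wq(1) sq unfolding walk_alt by (auto simp: successively_append_iff)
      have s2': "successively E (c # rev q1)"
      proof -
        have "successively (\<lambda>x y. E y x) (q1 @ [c])"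
          using s2 by (rule successively_mono) (rule sym)
        then show ?thesis using successively_rev[of E "q1@[c]"] by simp
      qed
      have hp: "hd (p1 @ [c]) = hd p'" using sp(1) by (cases p1) auto
      have "successively E (x # p1 @ [c])"
        using s1 wp(2) hp by (simp add: successively_Cons)
      then have a: "successively E (x#p1)" "E (last (x#p1)) c"
        using successively_append_iff[of E "x#p1" "[c]"] by auto
      have sC: "successively E C" unfolding C_def
        using successively_append_iff[of E "x#p1" "c # rev q1"] a s2' by simp
      have lastC: "last C = hd q'"
        unfolding C_def using sq by (cases q1) auto
      have setC: "set C \<subseteq> V"
        using Cons.prems(1,2) q sp(1) sq unfolding C_def walk_def by auto
      have distC: "distinct C"
        unfolding C_def using dp dq sp sq cq1 by auto
      have lenC: "length C \<ge> 3"
      proof (rule ccontr)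
        assume "\<not> 3 \<le> length C"
        then have "p1 = [] \<and> q1 = []" unfolding C_def by (cases p1; cases q1) auto
        then show False using hne sp(1) sq by simp
      qed
      have "is_cycle V E C"
        unfolding is_cycle_def walk_alt using sC setC distC lenC lastC wq(2) sym
        by (auto simp: C_def)
      then show ?thesis using nc by blast
    qed
  qed
qed


lemma tree_sym: "is_tree V E \<Longrightarrow> E u v \<Longrightarrow> E v u"
  by (simp add: is_tree_def graph_on_def)

lemma tree_path_spec:
  assumes t: "is_tree V E" and "a \<in> V" "b \<in> V"
  shows "walk V E (tree_path V E a b) \<and> distinct (tree_path V E a b)
         \<and> hd (tree_path V E a b) = a \<and> last (tree_path V E a b) = b"
  unfolding tree_path_def
proof (rule theI')
  obtain xs where xs: "walk V E xs" "hd xs = a" "last xs = b" "length xs = Suc (gdist V E a b)"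
    using gdist_ex[of V E a b] t assms unfolding is_tree_def by blast
  have "distinct xs" using shortest_distinct[OF xs] .
  moreover have "\<And>p q. walk V E p \<Longrightarrow> walk V E q \<Longrightarrow> distinct p \<Longrightarrow> distinct q \<Longrightarrow> hd p = a \<Longrightarrow> hd q = a
     \<Longrightarrow> last p = b \<Longrightarrow> last q = b \<Longrightarrow> p = q"
    using path_unique[of V E] t tree_sym unfolding is_tree_def by (metis (no_types))
  ultimately show "\<exists>!p. walk V E p \<and> distinct p \<and> hd p = a \<and> last p = b"
    using xs by blast
qed

lemma tree_path_eq:
  assumes t: "is_tree V E" and p: "walk V E p" "distinct p" "hd p = a" "last p = b"
  shows "tree_path V E a b = p"
proof -
  have ab: "a \<in> V" "b \<in> V" using p unfolding walk_def by auto
  have s: "walk V E (tree_path V E a b) \<and> distinct (tree_path V E a b)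
         \<and> hd (tree_path V E a b) = a \<and> last (tree_path V E a b) = b"
    using tree_path_spec[OF t ab] .
  have nc: "\<not>(\<exists>c. is_cycle V E c)" using t by (simp add: is_tree_def)
  show ?thesis
    using path_unique[OF nc tree_sym[OF t], of "tree_path V E a b" p] s p by auto
qed

lemma dtp_le:
  assumes t: "is_tree V E" and "a \<in> V" "b \<in> V" "c \<in> set (tree_path V E a b)"
  shows "dist_to_path V E r a b \<le> gdist V E r c"
  unfolding dist_to_path_def using assms by (intro Min_le) auto

lemma dtp_in:
  assumes t: "is_tree V E" and "a \<in> V" "b \<in> V"
  shows "\<exists>c\<in>set (tree_path V E a b). dist_to_path V E r a b = gdist V E r c"
proof -
  have "tree_path V E a b \<noteq> []" using tree_path_spec[OF assms] unfolding walk_def by blast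
  then have "dist_to_path V E r a b \<in> gdist V E r ` set (tree_path V E a b)"
    unfolding dist_to_path_def by (intro Min_in) auto
  then show ?thesis by auto
qed

lemma gdist_self: "u \<in> V \<Longrightarrow> gdist V E u u = 0"
  using gdist_le[of V E "[u]" u u] by (simp add: walk_def)

lemma gdist_zero:
  assumes "connected_graph V E" "u \<in> V" "v \<in> V" "gdist V E u v = 0"
  shows "u = v"
proof -
  obtain xs where "walk V E xs" "hd xs = u" "last xs = v" "length xs = Suc 0"
    using gdist_ex[OF assms(1-3)] assms(4) by auto
  then show ?thesis by (cases xs) auto
qed

lemma double_sum: "2 * (\<Sum>j<k. j) = k * (k - 1::nat)"
proof (induction k)
  case (Suc k)
  have "2 * (\<Sum>j<Suc k. j) = 2 * (\<Sum>j<k. j) + 2 * k" by simp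
  also have "\<dots> = k * (k - 1) + 2 * k" using Suc by simp
  also have "\<dots> = Suc k * (Suc k - 1)" by (cases k) (auto simp: algebra_simps)
  finally show ?case .
qed simp

lemma walk_prefix:
  assumes "walk V E w" "j < length w"
  shows "walk V E (take (Suc j) w)" "hd (take (Suc j) w) = hd w" "last (take (Suc j) w) = w ! j"
proof -
  have 1: "take (Suc j) w \<noteq> []" using assms(2) by (cases w) auto
  have 2: "set (take (Suc j) w) \<subseteq> V" using assms(1) unfolding walk_def by (meson order_trans set_take_subset)
  have 3: "\<forall>i. Suc i < length (take (Suc j) w) \<longrightarrow> E (take (Suc j) w ! i) (take (Suc j) w ! Suc i)"
    using assms(1) unfolding walk_def by simp
  show "walk V E (take (Suc j) w)" using 1 2 3 unfolding walk_def by (intro conjI)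
  show "hd (take (Suc j) w) = hd w" by simp
  show "last (take (Suc j) w) = w ! j" using assms(2) by (simp add: take_Suc_conv_app_nth)
qed


lemma upper:
  assumes fin: "finite V" and t: "is_tree V E" and r: "r \<in> V" and a: "a \<in> V"
  shows "2 * (\<Sum>b\<in>V. dist_to_path V E r a b) \<le> card V * (card V - 1) \<and>
         (2 * (\<Sum>b\<in>V. dist_to_path V E r a b) = card V * (card V - 1) \<longrightarrow> path_graph_with_ends V E r a)"
proof -
  let ?d = "dist_to_path V E r a"
  define N where "N = card V"
  define m where "m = gdist V E r a"
  have conn: "connected_graph V E" using t by (simp add: is_tree_def)
  obtain w where w: "walk V E w" "hd w = r" "last w = a" "length w = Suc (gdist V E r a)"
    using gdist_ex[OF conn r a] by blast
  have dw: "distinct w" using shortest_distinct[OF w] .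
  have lw: "length w = Suc m" using w(4) m_def by simp
  define W where "W = set w"
  have WV: "W \<subseteq> V" using w(1) unfolding walk_def W_def by blast
  have cW: "card W = Suc m" using distinct_card[OF dw] lw W_def by simp
  have mN: "Suc m \<le> N" using card_mono[OF fin WV] cW N_def by simp
  define f where "f b = min (gdist V E r b) m" for b
  have df: "?d b \<le> f b" if b: "b \<in> V" for b
  proof -
    have s: "walk V E (tree_path V E a b) \<and> distinct (tree_path V E a b)
         \<and> hd (tree_path V E a b) = a \<and> last (tree_path V E a b) = b"
      using tree_path_spec[OF t a b] .
    then have ne: "tree_path V E a b \<noteq> []" unfolding walk_def by blast
    have "a \<in> set (tree_path V E a b)" using s ne hd_in_set by metis
    moreover have "b \<in> set (tree_path V E a b)" using s ne last_in_set by metis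
    ultimately have "?d b \<le> gdist V E r a" "?d b \<le> gdist V E r b"
      using dtp_le[OF t a b] by blast+
    then show ?thesis unfolding f_def m_def by simp
  qed
  have Wimg: "W = nth w ` {..<Suc m}"
    by (auto simp: W_def in_set_conv_nth lw[symmetric])
  have inj: "inj_on (nth w) {..<Suc m}" using inj_on_nth[OF dw] lw by simp
  have fwj: "f (w ! j) \<le> j" if "j < Suc m" for j
  proof -
    have j: "j < length w" using that lw by simp
    have "gdist V E r (w ! j) \<le> length (take (Suc j) w) - 1"
      using gdist_le[OF walk_prefix(1)[OF w(1) j]] walk_prefix(2,3)[OF w(1) j] w(2) by simp
    also have "\<dots> = j" using j by simp
    finally show ?thesis unfolding f_def by simp
  qed
  have fW: "(\<Sum>b\<in>W. f b) \<le> (\<Sum>j<Suc m. j)"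
  proof -
    have "(\<Sum>b\<in>W. f b) = (\<Sum>j<Suc m. f (w ! j))"
      unfolding Wimg using sum.reindex[OF inj, of f] by simp
    also have "\<dots> \<le> (\<Sum>j<Suc m. j)" by (rule sum_mono) (simp add: fwj)
    finally show ?thesis .
  qed
  have fR: "(\<Sum>b\<in>V-W. f b) \<le> (N - Suc m) * m"
  proof -
    have "(\<Sum>b\<in>V-W. f b) \<le> of_nat (card (V - W)) * m"
      by (rule sum_bounded_above) (simp add: f_def)
    moreover have "card (V - W) = N - Suc m"
      using card_Diff_subset[OF finite_subset[OF WV fin] WV] cW N_def by simp
    ultimately show ?thesis by simp
  qed
  have split: "(\<Sum>b\<in>V. f b) = (\<Sum>b\<in>V-W. f b) + (\<Sum>b\<in>W. f b)"
    using sum.subset_diff[OF WV fin] .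
  have Sle: "(\<Sum>b\<in>V. ?d b) \<le> (\<Sum>b\<in>V. f b)" by (rule sum_mono) (simp add: df)
  have ds: "2 * (\<Sum>j<Suc m. j) = Suc m * m" using double_sum[of "Suc m"] by simp
  define k where "k = N - Suc m"
  have Nk: "N = Suc m + k" using mN k_def by simp
  have ar: "Suc m * m + 2 * (k * m) + k + k * k = N * (N - 1)"
    unfolding Nk by (simp add: algebra_simps)
  have main: "2 * (\<Sum>b\<in>V. ?d b) + k + k * k \<le> N * (N - 1)"
  proof -
    have "2 * (\<Sum>b\<in>V. ?d b) \<le> 2 * (\<Sum>b\<in>V. f b)" using Sle by simp
    also have "\<dots> \<le> 2 * ((N - Suc m) * m) + 2 * (\<Sum>j<Suc m. j)" using split fR fW by simp
    also have "\<dots> = 2 * (k * m) + Suc m * m" using ds k_def by simp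
    finally show ?thesis using ar by simp
  qed
  have eqcase: "path_graph_with_ends V E r a" if eq: "2 * (\<Sum>b\<in>V. ?d b) = N * (N - 1)"
  proof -
    have "k = 0" using main eq by simp
    then have lwN: "length w = N" using Nk lw by simp
    have setw: "set w = V" using card_subset_eq[OF fin WV] cW lwN lw N_def W_def by simp
    have g: "graph_on V E" using t by (simp add: is_tree_def)
    have sym: "\<And>u v. E u v \<Longrightarrow> E v u" using g by (simp add: graph_on_def)
    have irr: "\<And>v. \<not> E v v" using g by (simp add: graph_on_def)
    have sw: "successively E w" using w(1) walk_alt by blast
    have key: "j = Suc i" if ij: "i < j" "j < N" "E (w ! i) (w ! j)" for i j
    proof (rule ccontr)
      assume "j \<noteq> Suc i"
      then have ij2: "Suc i < j" using ij by simp
      define w' where "w' = take (Suc i) w @ drop j w"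
      have il: "i < length w" using ij lwN by simp
      have jl: "j < length w" using ij lwN by simp
      have s1: "successively E (take (Suc i) w)"
        using walk_prefix(1)[OF w(1) il] walk_alt by blast
      have s2: "successively E (drop j w)"
        using sw successively_append_iff[of E "take j w" "drop j w"] by simp
      have ne1: "take (Suc i) w \<noteq> []" using il by (cases w) auto
      have ne2: "drop j w \<noteq> []" using jl by simp
      have l1: "last (take (Suc i) w) = w ! i" using walk_prefix(3)[OF w(1) il] .
      have h2: "hd (drop j w) = w ! j" using hd_drop_conv_nth[OF jl] .
      have sw': "successively E w'" unfolding w'_def successively_append_iff
        using s1 s2 l1 h2 ij(3) by simp
      have setw': "set w' \<subseteq> V" unfolding w'_def using setw
        by (auto dest: in_set_takeD in_set_dropD)
      have ww': "walk V E w'" using sw' setw' ne1 unfolding walk_alt w'_def by simp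
      have hw': "hd w' = r" unfolding w'_def using ne1 w(2) by simp
      have lw': "last w' = a" unfolding w'_def using ne2 w(3) jl by (simp add: last_drop)
      have "gdist V E r a \<le> length w' - 1" using gdist_le[OF ww' hw' lw'] .
      moreover have "length w' = Suc i + (N - j)" unfolding w'_def using il jl lwN by simp
      ultimately show False using ij2 ij lw lwN m_def by simp
    qed
    have edges: "E u v \<longleftrightarrow> (\<exists>i. Suc i < length w \<and> {u, v} = {w ! i, w ! Suc i})" for u v
    proof
      assume "\<exists>i. Suc i < length w \<and> {u, v} = {w ! i, w ! Suc i}"
      then obtain i where i: "Suc i < length w" "{u, v} = {w ! i, w ! Suc i}" by blast
      have e: "E (w ! i) (w ! Suc i)" using successively_nth[OF sw i(1)] .
      from i(2) have "(u = w ! i \<and> v = w ! Suc i) \<or> (u = w ! Suc i \<and> v = w ! i)"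
        by (auto simp: doubleton_eq_iff)
      then show "E u v" using e sym by blast
    next
      assume e: "E u v"
      then have "u \<in> set w" "v \<in> set w" using g setw unfolding graph_on_def by auto
      then obtain i j where ij: "i < N" "j < N" "u = w ! i" "v = w ! j"
        by (auto simp: in_set_conv_nth lwN)
      have "i \<noteq> j" using e irr ij by blast
      then consider "i < j" | "j < i" by linarith
      then show "\<exists>i. Suc i < length w \<and> {u, v} = {w ! i, w ! Suc i}"
      proof cases
        case 1
        then have "j = Suc i" using key[of i j] e ij by simp
        then show ?thesis using ij lwN by auto
      next
        case 2
        then have "i = Suc j" using key[of j i] sym[OF e] ij by simp
        then show ?thesis using ij lwN by (intro exI[of _ j]) auto
      qed
    qed
    show ?thesis unfolding path_graph_with_ends_def
      using dw setw edges w(2,3) by blast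
  qed
  show ?thesis using main eqcase N_def by simp
qed


lemma lower_path:
  assumes fin: "finite V" and t: "is_tree V E" and pg: "path_graph_with_ends V E r a"
  shows "card V * (card V - 1) \<le> 2 * (\<Sum>b\<in>V. dist_to_path V E r a b)"
proof -
  let ?d = "dist_to_path V E r a"
  obtain p where p: "distinct p" "set p = V"
    "\<And>u v. E u v \<longleftrightarrow> (\<exists>i. Suc i < length p \<and> {u, v} = {p ! i, p ! Suc i})"
    "hd p = r" "last p = a"
    using pg unfolding path_graph_with_ends_def by blast
  define N where "N = card V"
  have lp: "length p = N" using distinct_card[OF p(1)] p(2) N_def by simp
  have pne: "p \<noteq> []" using t p(2) by (auto simp: is_tree_def)
  have conn: "connected_graph V E" using t by (simp add: is_tree_def)
  have sym: "\<And>u v. E u v \<Longrightarrow> E v u" using tree_sym[OF t] .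
  have sp: "successively E p" unfolding successively_conv_nth using p(3) by blast
  have wp: "walk V E p" using sp pne p(2) by (simp add: walk_alt)
  have r0: "r = p ! 0" using p(4) pne by (simp add: hd_conv_nth)
  have rV: "r \<in> V" "a \<in> V" using p(2,4,5) pne by auto
  have idx: "k < length xs"
    if "successively E xs" "xs \<noteq> []" "hd xs = p ! 0" "k < length p" "last xs = p ! k" for xs k
    using that
  proof (induction xs arbitrary: k rule: rev_induct)
    case Nil
    then show ?case by simp
  next
    case (snoc y xs)
    show ?case
    proof (cases "xs = []")
      case True
      then have "p ! k = p ! 0" using snoc.prems by simp
      then have "k = 0" using nth_eq_iff_index_eq[OF p(1) snoc.prems(4)] pne by simp
      then show ?thesis by simp
    next
      case False
      have sxs: "successively E xs" "E (last xs) y"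
        using snoc.prems(1) False by (auto simp: successively_append_iff)
      have hxs: "hd xs = p ! 0" using snoc.prems(3) False by simp
      obtain i where i: "Suc i < length p" "{last xs, y} = {p ! i, p ! Suc i}"
        using p(3) sxs(2) by blast
      have yk: "y = p ! k" using snoc.prems(5) by simp
      from i(2) have "(last xs = p ! i \<and> y = p ! Suc i) \<or> (last xs = p ! Suc i \<and> y = p ! i)"
        by (auto simp: doubleton_eq_iff)
      then show ?thesis
      proof
        assume h: "last xs = p ! i \<and> y = p ! Suc i"
        then have "i < length xs" using snoc.IH[OF sxs(1) False hxs] i(1) by simp
        moreover have "k = Suc i" using h yk nth_eq_iff_index_eq[OF p(1) snoc.prems(4) i(1)] by simp
        ultimately show ?thesis by simp
      next
        assume h: "last xs = p ! Suc i \<and> y = p ! i"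
        then have "Suc i < length xs" using snoc.IH[OF sxs(1) False hxs] i(1) by simp
        moreover have "k = i" using h yk nth_eq_iff_index_eq[OF p(1) snoc.prems(4)] i(1) by simp
        ultimately show ?thesis by simp
      qed
    qed
  qed
  have gd: "k \<le> gdist V E r (p ! k)" if k: "k < N" for k
  proof -
    have "p ! k \<in> V" using p(2) k lp by auto
    then obtain xs where xs: "walk V E xs" "hd xs = r" "last xs = p ! k"
      "length xs = Suc (gdist V E r (p ! k))"
      using gdist_ex[OF conn rV(1)] by blast
    have "k < length xs" using idx[of xs k] xs r0 k lp unfolding walk_alt by blast
    then show ?thesis using xs(4) by simp
  qed
  have dlow: "j \<le> ?d (p ! j)" if j: "j < N" for j
  proof -
    let ?q = "rev (drop j p)"
    have jl: "j < length p" using j lp by simp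
    have ne: "drop j p \<noteq> []" using jl by simp
    have sd: "successively E (drop j p)"
      using sp successively_append_iff[of E "take j p" "drop j p"] by simp
    have "successively (\<lambda>x y. E y x) (drop j p)"
      using sd by (rule successively_mono) (rule sym)
    then have sq: "successively E ?q" by simp
    have wq: "walk V E ?q" using sq ne p(2) unfolding walk_alt
      by (auto dest: in_set_dropD)
    have hq: "hd ?q = a" using ne p(5) jl by (simp add: hd_rev last_drop)
    have lq: "last ?q = p ! j" using ne jl by (simp add: last_rev hd_drop_conv_nth)
    have tp: "tree_path V E a (p ! j) = ?q"
      using tree_path_eq[OF t wq _ hq lq] p(1) by simp
    have pj: "p ! j \<in> V" using p(2) jl by auto
    obtain c where c: "c \<in> set ?q" "?d (p ! j) = gdist V E r c"
      using dtp_in[OF t rV(2) pj, of r] tp by auto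
    then obtain s where s: "s < length (drop j p)" "c = drop j p ! s"
      by (auto simp: in_set_conv_nth)
    have cs: "c = p ! (j + s)" using s jl by simp
    have "j + s < N" using s lp by simp
    then have "j + s \<le> gdist V E r c" using gd cs by simp
    then show ?thesis using c(2) by simp
  qed
  have Vimg: "V = nth p ` {..<N}"
    by (auto simp: p(2)[symmetric] in_set_conv_nth lp[symmetric])
  have inj: "inj_on (nth p) {..<N}" using inj_on_nth[OF p(1)] lp by simp
  have "(\<Sum>b\<in>V. ?d b) = (\<Sum>j<N. ?d (p ! j))"
    using sum.reindex[OF inj, of ?d] Vimg by simp
  moreover have "(\<Sum>j<N. j) \<le> (\<Sum>j<N. ?d (p ! j))"
    by (rule sum_mono) (simp add: dlow)
  ultimately show ?thesis using double_sum[of N] N_def by simp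
qed

lemma zero_iff:
  assumes fin: "finite V" and t: "is_tree V E" and r: "r \<in> V" and a: "a \<in> V"
  shows "(\<Sum>b\<in>V. dist_to_path V E r a b) = 0 \<longleftrightarrow> r = a"
proof
  assume "r = a"
  have "dist_to_path V E r a b = 0" if b: "b \<in> V" for b
  proof -
    have s: "walk V E (tree_path V E a b) \<and> distinct (tree_path V E a b)
         \<and> hd (tree_path V E a b) = a \<and> last (tree_path V E a b) = b"
      using tree_path_spec[OF t a b] .
    then have ne: "tree_path V E a b \<noteq> []" unfolding walk_def by blast
    have "a \<in> set (tree_path V E a b)" using s ne hd_in_set by metis
    then have "dist_to_path V E r a b \<le> gdist V E r a" using dtp_le[OF t a b] by blast
    then show ?thesis using gdist_self[OF r] \<open>r = a\<close> by simp
  qed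
  then show "(\<Sum>b\<in>V. dist_to_path V E r a b) = 0" by simp
next
  assume "(\<Sum>b\<in>V. dist_to_path V E r a b) = 0"
  then have d0: "dist_to_path V E r a a = 0" using fin a by simp
  have "tree_path V E a a = [a]"
    using tree_path_eq[OF t, of "[a]" a a] a by (simp add: walk_def)
  then have "gdist V E r a = 0" using dtp_in[OF t a a, of r] d0 by auto
  then show "r = a" using gdist_zero[of V E r a] t r a by (simp add: is_tree_def)
qed

theorem lemma2p7:
  fixes n :: nat and E :: "nat \<Rightarrow> nat \<Rightarrow> bool" and r a :: nat
  assumes "is_tree {1..n} E" and "r \<in> {1..n}" and "a \<in> {1..n}"
  shows "0 \<le> 2 * (\<Sum>b=1..n. dist_to_path {1..n} E r a b)
       \<and> 2 * (\<Sum>b=1..n. dist_to_path {1..n} E r a b) \<le> n * (n - 1)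
       \<and> (2 * (\<Sum>b=1..n. dist_to_path {1..n} E r a b) = n * (n - 1)
            \<longleftrightarrow> path_graph_with_ends {1..n} E r a)
       \<and> (2 * (\<Sum>b=1..n. dist_to_path {1..n} E r a b) = 0 \<longleftrightarrow> r = a)"
proof -
  have fin: "finite {1..n}" by simp
  have c: "card {1..n} = n" by simp
  note u = upper[OF fin assms, unfolded c]
  note l = lower_path[OF fin assms(1), of r a, unfolded c]
  note z = zero_iff[OF fin assms]
  show ?thesis using u l z by (auto intro: antisym)
qed

end
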